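(* In the algorithm described in the context, only four types of messages are used, namely $\textsc{write0}(v)$, $\textsc{write1}(v)$, $\textsc{read}()$ and $\textsc{proceed}()$, and no message carries control information beyond its type. Moreover, a read operation requires $O(n)$ messages and a write operation requires $O(n^2)$ messages.
   Context: Model. There are $n$ asynchronous processes $p_1,\dots,p_n$, of which up to $t<n/2$ may crash. Every ordered pair of processes is connected by a reliable, asynchronous, not necessarily FIFO channel. One process $p_w$ is the single writer; the initial register value is $v_0$. The notation $\textsc{write}(b,v)$ stands for $\textsc{write0}(v)$ if $b=0$ and for $\textsc{write1}(v)$ if $b=1$. Local variables of $p_i$. These are: an array $history_i$ with $history_i[0]=v_0$; an integer array $w\_sync_i[1..n]$, initially all $0$; and an integer array $r\_sync_i[1..n]$, initially all $0$. $\mathsf{write}(v)$, executed by $p_w$: (1) $wsn\gets w\_sync_w[w]+1$; $w\_sync_w[w]\gets wsn$; $history_w[wsn]\gets v$; $b\gets wsn\bmod 2$. (2) For each $j$ with $w\_sync_w[j]=wsn-1$, send $\textsc{write}(b,v)$ to $p_j$. (3) Wait until at least $n-t$ indices $j$ satisfy $w\_sync_w[j]=wsn$. (4) Return. $\mathsf{read}()$, executed by $p_i$: (5) $r\_sync_i[i]\gets r\_sync_i[i]+1$, and let $rsn$ denote this new value. (6) Send $\textsc{read}()$ to every $p_j$ with $j\ne i$. (7) Wait until at least $n-t$ indices $j$ satisfy $r\_sync_i[j]=rsn$. (8) $sn\gets w\_sync_i[i]$. (9) Wait until at least $n-t$ indices $j$ satisfy $w\_sync_i[j]\ge sn$. (10)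 Return $history_i[sn]$. On receipt of $\textsc{write}(b,v)$ from $p_j$, process $p_i$ executes: (i) Wait until $b=(w\_sync_i[j]+1)\bmod 2$. (ii) $wsn\gets w\_sync_i[j]+1$. (iii) If $wsn=w\_sync_i[i]+1$: set $w\_sync_i[i]\gets wsn$ and $history_i[wsn]\gets v$, then for each $\ell$ with $w\_sync_i[\ell]=wsn-1$, send $\textsc{write}(wsn\bmod 2,v)$ to $p_\ell$. (iv) Otherwise, if $wsn<w\_sync_i[i]$, send $\textsc{write}((wsn+1)\bmod 2, history_i[wsn+1])$ to $p_j$. (v) $w\_sync_i[j]\gets wsn$. On receipt of $\textsc{read}()$ from $p_j$, process $p_i$ executes: (i) $sn\gets w\_sync_i[i]$. (ii) Wait until $w\_sync_i[j]\ge sn$. (iii) Send $\textsc{proceed}()$ to $p_j$. On receipt of $\textsc{proceed}()$ from $p_j$, process $p_i$ sets $r\_sync_i[j]\gets r\_sync_i[j]+1$. *)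

theory Defs
  imports Main "HOL-Library.Multiset"
begin

datatype 'v msg = Write0 'v | Write1 'v | Read | Proceed

text \<open>WRITE(b,v): WRITE0(v) if b = 0, WRITE1(v) if b = 1; here b is given as a
sequence number whose parity is taken (b = wsn mod 2).\<close>
definition wmsg :: "nat \<Rightarrow> 'v \<Rightarrow> 'v msg" where
  "wmsg k v = (if k mod 2 = 0 then Write0 v else Write1 v)"

text \<open>Ghost accounting tags (NOT part of the message content, never read by the
algorithm): a WRITE message is attributed to the write operation with the
sequence number it conveys; READ messages, and the PROCEED message answering
them, are attributed to the read operation (reader, read sequence number).\<close>
datatype tag = WTag nat | RTag nat nat

datatype phase = Idle | WWait nat | RWait1 nat | RWait2 nat

record 'v lstate =
  hist   :: "nat \<Rightarrow> 'v option"
  wsync  :: "nat \<Rightarrow> nat"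
  rsync  :: "nat \<Rightarrow> nat"
  phase  :: phase
  pend   :: "(nat \<times> nat \<times> tag) multiset"  \<comment> \<open>pending READ handlers: (sender j, sn, ghost tag)\<close>
  crashed :: bool

text \<open>Network entries: (message, ghost tag, source, destination).  The network is
a multiset (reliable, non-FIFO); \<open>sent\<close> is a ghost log of every message ever sent.\<close>
type_synonym 'v netmsg = "'v msg \<times> tag \<times> nat \<times> nat"

record 'v gstate =
  procs :: "nat \<Rightarrow> 'v lstate"
  net   :: "'v netmsg multiset"
  sent  :: "'v netmsg list"

definition send :: "'v msg \<Rightarrow> tag \<Rightarrow> nat \<Rightarrow> nat \<Rightarrow> 'v gstate \<Rightarrow> 'v gstate" where
  "send m tg s d g = g\<lparr>net := net g + {#(m, tg, s, d)#}, sent := sent g @ [(m, tg, s, d)]\<rparr>"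

definition send_all :: "'v msg \<Rightarrow> tag \<Rightarrow> nat \<Rightarrow> nat list \<Rightarrow> 'v gstate \<Rightarrow> 'v gstate" where
  "send_all m tg s ds g = fold (\<lambda>d. send m tg s d) ds g"

definition upd_loc :: "nat \<Rightarrow> ('v lstate \<Rightarrow> 'v lstate) \<Rightarrow> 'v gstate \<Rightarrow> 'v gstate" where
  "upd_loc i f g = g\<lparr>procs := (procs g)(i := f (procs g i))\<rparr>"

definition init_loc :: "'v \<Rightarrow> 'v lstate" where
  "init_loc v0 = \<lparr>hist = [0 \<mapsto> v0], wsync = (\<lambda>_. 0), rsync = (\<lambda>_. 0),
                  phase = Idle, pend = {#}, crashed = False\<rparr>"

definition init :: "'v \<Rightarrow> 'v gstate" where
  "init v0 = \<lparr>procs = (\<lambda>_. init_loc v0), net = {#}, sent = []\<rparr>"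

definition bit_of :: "'v msg \<Rightarrow> nat" where
  "bit_of m = (case m of Write1 _ \<Rightarrow> 1 | _ \<Rightarrow> 0)"

text \<open>Handler for a WRITE(b,v) message from j at process i, once its wait
condition (i) holds: steps (ii)-(v).\<close>
definition recv_write :: "nat \<Rightarrow> nat \<Rightarrow> nat \<Rightarrow> 'v \<Rightarrow> 'v gstate \<Rightarrow> 'v gstate" where
  "recv_write n i j v g =
    (let L = procs g i; wsn = wsync L j + 1;
         g1 = (if wsn = wsync L i + 1 then
                 (let g' = upd_loc i (\<lambda>l. l\<lparr>wsync := (wsync l)(i := wsn),
                                             hist := (hist l)(wsn \<mapsto> v)\<rparr>) g;
                      L' = procs g' i
                  in send_all (wmsg wsn v) (WTag wsn) i
                       (filter (\<lambda>l. wsync L' l = wsn - 1) [0..<n]) g')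
               else if wsn < wsync L i then
                 send (wmsg (wsn + 1) (the (hist L (wsn + 1)))) (WTag (wsn + 1)) i j g
               else g)
     in upd_loc i (\<lambda>l. l\<lparr>wsync := (wsync l)(j := wsn)\<rparr>) g1)"

text \<open>One atomic step of the system with n processes, at most t crashes,
writer w.  Parameter v is the value argument of a write invocation.\<close>
inductive step :: "nat \<Rightarrow> nat \<Rightarrow> nat \<Rightarrow> 'v gstate \<Rightarrow> 'v gstate \<Rightarrow> bool"
  for n t w where
  crash:
    "\<lbrakk> i < n; \<not> crashed (procs g i); card {k. k < n \<and> crashed (procs g k)} < t \<rbrakk>
     \<Longrightarrow> step n t w g (upd_loc i (\<lambda>l. l\<lparr>crashed := True\<rparr>) g)"
| write_invoke:
    "\<lbrakk> \<not> crashed (procs g w); phase (procs g w) = Idle; wsn = wsync (procs g w) w + 1;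
       g' = upd_loc w (\<lambda>l. l\<lparr>wsync := (wsync l)(w := wsn), hist := (hist l)(wsn \<mapsto> v),
                              phase := WWait wsn\<rparr>) g \<rbrakk>
     \<Longrightarrow> step n t w g (send_all (wmsg wsn v) (WTag wsn) w
                         (filter (\<lambda>j. wsync (procs g' w) j = wsn - 1) [0..<n]) g')"
| write_return:
    "\<lbrakk> \<not> crashed (procs g w); phase (procs g w) = WWait wsn;
       card {j. j < n \<and> wsync (procs g w) j = wsn} \<ge> n - t \<rbrakk>
     \<Longrightarrow> step n t w g (upd_loc w (\<lambda>l. l\<lparr>phase := Idle\<rparr>) g)"
| read_invoke:
    "\<lbrakk> i < n; \<not> crashed (procs g i); phase (procs g i) = Idle; rsn = rsync (procs g i) i + 1 \<rbrakk>
     \<Longrightarrow> step n t w g (send_all Read (RTag i rsn) i (filter (\<lambda>j. j \<noteq> i) [0..<n])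
                (upd_loc i (\<lambda>l. l\<lparr>rsync := (rsync l)(i := rsn), phase := RWait1 rsn\<rparr>) g))"
| read_mid:
    "\<lbrakk> i < n; \<not> crashed (procs g i); phase (procs g i) = RWait1 rsn;
       card {j. j < n \<and> rsync (procs g i) j = rsn} \<ge> n - t \<rbrakk>
     \<Longrightarrow> step n t w g (upd_loc i (\<lambda>l. l\<lparr>phase := RWait2 (wsync l i)\<rparr>) g)"
| read_return:
    "\<lbrakk> i < n; \<not> crashed (procs g i); phase (procs g i) = RWait2 sn;
       card {j. j < n \<and> wsync (procs g i) j \<ge> sn} \<ge> n - t \<rbrakk>
     \<Longrightarrow> step n t w g (upd_loc i (\<lambda>l. l\<lparr>phase := Idle\<rparr>) g)"
| recv_write_step:
    "\<lbrakk> i < n; \<not> crashed (procs g i); (m, tg, j, i) \<in># net g; m = Write0 v \<or> m = Write1 v;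
       bit_of m = (wsync (procs g i) j + 1) mod 2 \<rbrakk>
     \<Longrightarrow> step n t w g (recv_write n i j v (g\<lparr>net := net g - {#(m, tg, j, i)#}\<rparr>))"
| recv_read:
    "\<lbrakk> i < n; \<not> crashed (procs g i); (Read, tg, j, i) \<in># net g \<rbrakk>
     \<Longrightarrow> step n t w g (upd_loc i (\<lambda>l. l\<lparr>pend := pend l + {#(j, wsync l i, tg)#}\<rparr>)
                        (g\<lparr>net := net g - {#(Read, tg, j, i)#}\<rparr>))"
| read_respond:
    "\<lbrakk> i < n; \<not> crashed (procs g i); (j, sn, tg) \<in># pend (procs g i);
       wsync (procs g i) j \<ge> sn \<rbrakk>
     \<Longrightarrow> step n t w g (send Proceed tg i j
                (upd_loc i (\<lambda>l. l\<lparr>pend := pend l - {#(j, sn, tg)#}\<rparr>) g))"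
| recv_proceed:
    "\<lbrakk> i < n; \<not> crashed (procs g i); (Proceed, tg, j, i) \<in># net g \<rbrakk>
     \<Longrightarrow> step n t w g (upd_loc i (\<lambda>l. l\<lparr>rsync := (rsync l)(j := rsync l j + 1)\<rparr>)
                        (g\<lparr>net := net g - {#(Proceed, tg, j, i)#}\<rparr>))"

definition reachable :: "nat \<Rightarrow> nat \<Rightarrow> nat \<Rightarrow> 'v \<Rightarrow> 'v gstate \<Rightarrow> bool" where
  "reachable n t w v0 g = (step n t w)\<^sup>*\<^sup>* (init v0) g"

definition msgs_of :: "'v gstate \<Rightarrow> tag \<Rightarrow> nat" where
  "msgs_of g tg = length (filter (\<lambda>(m, tg', s, d). tg' = tg) (sent g))"

end

theory Submission
  imports Defs
begin

lemma send_all_simps[simp]: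
  "procs (send_all m tg s ds g) = procs g"
  "sent (send_all m tg s ds g) = sent g @ map (\<lambda>d. (m,tg,s,d)) ds"
  "net (send_all m tg s ds g) = net g + mset (map (\<lambda>d. (m,tg,s,d)) ds)"
  by (induction ds arbitrary: g; simp add: send_all_def send_def)+

lemma send_simps[simp]:
  "procs (send m tg s d g) = procs g"
  "sent (send m tg s d g) = sent g @ [(m,tg,s,d)]"
  "net (send m tg s d g) = net g + {#(m,tg,s,d)#}"
  by (simp_all add: send_def)

lemma upd_loc_simps[simp]:
  "procs (upd_loc i f g) = (procs g)(i := f (procs g i))"
  "sent (upd_loc i f g) = sent g"
  "net (upd_loc i f g) = net g"
  by (simp_all add: upd_loc_def)

lemma rw_procs:
  "wsync (procs (recv_write n i j v g) x) = (if x = i then (if wsync (procs g i) j = wsync (procs g i) i then (wsync (procs g i))(i := wsync (procs g i) j + 1, j := wsync (procs g i) j + 1) else (wsync (procs g i))(j := wsync (procs g i) j + 1)) else wsync (procs g x))"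
  "rsync (procs (recv_write n i j v g) x) = rsync (procs g x)"
  "pend (procs (recv_write n i j v g) x) = pend (procs g x)"
  by (auto simp: recv_write_def Let_def)

lemma rw_sent:
  "sent (recv_write n i j v g) = sent g @ (if wsync (procs g i) j = wsync (procs g i) i
     then map (\<lambda>l. (wmsg (wsync (procs g i) j + 1) v, WTag (wsync (procs g i) j + 1), i, l))
       (filter (\<lambda>l. ((wsync (procs g i))(i := wsync (procs g i) j + 1)) l = wsync (procs g i) j) [0..<n])
     else if wsync (procs g i) j + 1 < wsync (procs g i) i then
       [(wmsg (wsync (procs g i) j + 2) (the (hist (procs g i) (wsync (procs g i) j + 2))), WTag (wsync (procs g i) j + 2), i, j)]
     else [])"
  by (auto simp: recv_write_def Let_def)

lemma rw_net:
  "net (recv_write n i j v g) = net g + mset (if wsync (procs g i) j = wsync (procs g i) i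
     then map (\<lambda>l. (wmsg (wsync (procs g i) j + 1) v, WTag (wsync (procs g i) j + 1), i, l))
       (filter (\<lambda>l. ((wsync (procs g i))(i := wsync (procs g i) j + 1)) l = wsync (procs g i) j) [0..<n])
     else if wsync (procs g i) j + 1 < wsync (procs g i) i then
       [(wmsg (wsync (procs g i) j + 2) (the (hist (procs g i) (wsync (procs g i) j + 2))), WTag (wsync (procs g i) j + 2), i, j)]
     else [])"
  by (auto simp: recv_write_def Let_def)


lemma wmsg_ne[simp]: "wmsg k v \<noteq> Read" "wmsg k v \<noteq> Proceed"
  by (simp_all add: wmsg_def)

lemma rw_rest[simp]: "sent (g\<lparr>net := X\<rparr>) = sent g" "procs (g\<lparr>net := X\<rparr>) = procs g" by simp_all

lemma step_mono:
  "step n t w g g' \<Longrightarrow> wsync (procs g x) y \<le> wsync (procs g' x) y \<and> rsync (procs g x) y \<le> rsync (procs g' x) y"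
proof (induction rule: step.induct)
  case (recv_write_step i g m tg j v)
  then show ?case by (simp add: rw_procs)
qed simp_all

lemma rw_net_src: "x \<in># net (recv_write n i j v g) \<Longrightarrow> x \<in># net g \<or> fst (snd (snd x)) = i"
  unfolding rw_net by (auto split: if_splits)

definition srcok :: "nat \<Rightarrow> 'v gstate \<Rightarrow> bool" where
  "srcok n g = (\<forall>x\<in>#net g. fst (snd (snd x)) < n)"

lemma srcok_step: "step n t w g g' \<Longrightarrow> w < n \<Longrightarrow> srcok n g \<Longrightarrow> srcok n g'"
proof (induction rule: step.induct)
  case (recv_write_step i g m tg j v)
  show ?case unfolding srcok_def
  proof
    fix x assume "x \<in># net (recv_write n i j v (g\<lparr>net := net g - {#(m, tg, j, i)#}\<rparr>))"
    then have "x \<in># net g - {#(m, tg, j, i)#} \<or> fst (snd (snd x)) = i" using rw_net_src by fastforce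
    then show "fst (snd (snd x)) < n" using recv_write_step by (auto simp: srcok_def dest: in_diffD)
  qed
qed (auto simp: srcok_def dest: in_diffD)

definition D1 :: "nat \<Rightarrow> 'v gstate \<Rightarrow> nat \<Rightarrow> nat set" where
  "D1 n g k = {x. x < n \<and> k \<le> wsync (procs g x) x}"
definition D2 :: "nat \<Rightarrow> 'v gstate \<Rightarrow> nat \<Rightarrow> (nat \<times> nat) set" where
  "D2 n g k = {(x,y). x < n \<and> y < n \<and> k \<le> Suc (wsync (procs g x) y)}"
definition I3 :: "nat \<Rightarrow> 'v gstate \<Rightarrow> bool" where
  "I3 n g = (\<forall>k. msgs_of g (WTag k) \<le> n * card (D1 n g k) + card (D2 n g k))"

lemma D1_fin: "finite (D1 n g k)" unfolding D1_def by auto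
lemma D2_fin: "finite (D2 n g k)"
  by (rule finite_subset[of _ "{..<n} \<times> {..<n}"]) (auto simp: D2_def)

lemma card_gain: "finite B \<Longrightarrow> A \<subseteq> B \<Longrightarrow> x \<in> B \<Longrightarrow> x \<notin> A \<Longrightarrow> card A + 1 \<le> card B"
proof -
  assume a: "finite B" "A \<subseteq> B" "x \<in> B" "x \<notin> A"
  have "finite A" using a finite_subset by blast
  then have "card (insert x A) = card A + 1" using a by simp
  moreover have "card (insert x A) \<le> card B" using a by (intro card_mono) auto
  ultimately show ?thesis by simp
qed

lemma I3_gen:
  fixes g g' :: "'v gstate"
  assumes I: "I3 n g"
    and mono: "\<And>x y. wsync (procs g x) y \<le> wsync (procs g' x) y"
    and S: "sent g' = sent g @ new"
    and N: "\<And>k. length (filter (\<lambda>(m,tg',s,d). tg' = WTag k) new) = 0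
         \<or> (length (filter (\<lambda>(m,tg',s,d). tg' = WTag k) new) \<le> n \<and> (\<exists>x. x \<in> D1 n g' k \<and> x \<notin> D1 n g k))
         \<or> (length (filter (\<lambda>(m,tg',s,d). tg' = WTag k) new) \<le> 1 \<and> (\<exists>p. p \<in> D2 n g' k \<and> p \<notin> D2 n g k))"
  shows "I3 n g'"
  unfolding I3_def
proof
  fix k
  have s1: "D1 n g k \<subseteq> D1 n g' k" using mono by (auto simp: D1_def intro: order_trans)
  have s2: "D2 n g k \<subseteq> D2 n g' k" using mono by (auto simp: D2_def intro: order_trans)
  have c1: "card (D1 n g k) \<le> card (D1 n g' k)" by (rule card_mono[OF D1_fin s1])
  have c2: "card (D2 n g k) \<le> card (D2 n g' k)" by (rule card_mono[OF D2_fin s2])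
  have M: "msgs_of g' (WTag k) = msgs_of g (WTag k) + length (filter (\<lambda>(m,tg',s,d). tg' = WTag k) new)"
    by (simp add: msgs_of_def S)
  have Ik: "msgs_of g (WTag k) \<le> n * card (D1 n g k) + card (D2 n g k)" using I by (simp add: I3_def)
  from N[of k] show "msgs_of g' (WTag k) \<le> n * card (D1 n g' k) + card (D2 n g' k)"
  proof (elim disjE conjE exE)
    assume "length (filter (\<lambda>(m,tg',s,d). tg' = WTag k) new) = 0"
    then show ?thesis using M Ik c1 c2 proof -
      assume z: "length (filter (\<lambda>(m,tg',s,d). tg' = WTag k) new) = 0"
      have "n * card (D1 n g k) \<le> n * card (D1 n g' k)" using c1 by simp
      then show ?thesis using M Ik c2 z by linarith
    qed
  next
    fix x assume l: "length (filter (\<lambda>(m,tg',s,d). tg' = WTag k) new) \<le> n" and x: "x \<in> D1 n g' k" "x \<notin> D1 n g k"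
    have "card (D1 n g k) + 1 \<le> card (D1 n g' k)" by (rule card_gain[OF D1_fin s1 x])
    then have "n * card (D1 n g k) + n \<le> n * card (D1 n g' k)"
      using mult_le_mono2[of "card (D1 n g k) + 1" "card (D1 n g' k)" n] by (simp add: algebra_simps)
    then show ?thesis using M Ik c2 l by linarith
  next
    fix p assume l: "length (filter (\<lambda>(m,tg',s,d). tg' = WTag k) new) \<le> 1" and p: "p \<in> D2 n g' k" "p \<notin> D2 n g k"
    have "card (D2 n g k) + 1 \<le> card (D2 n g' k)" by (rule card_gain[OF D2_fin s2 p])
    moreover have "n * card (D1 n g k) \<le> n * card (D1 n g' k)" using c1 by simp
    ultimately show ?thesis using M Ik l by linarith
  qed
qed

lemma len_filter_map_tag:
  "length (filter (\<lambda>(m,tg',s,d). tg' = T) (map (\<lambda>d. (M,TG,S,d)) xs)) = (if TG = T then length xs else 0)"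
  by (induction xs) auto


definition isR :: "tag \<Rightarrow> bool" where "isR tg = (case tg of RTag _ _ \<Rightarrow> True | _ \<Rightarrow> False)"

definition tagok :: "'v gstate \<Rightarrow> bool" where
  "tagok g = ((\<forall>x\<in>#net g. fst x = Read \<longrightarrow> isR (fst (snd x)))
      \<and> (\<forall>k. \<forall>x\<in>#pend (procs g k). isR (snd (snd x))))"

lemma tagok_step: "step n t w g g' \<Longrightarrow> tagok g \<Longrightarrow> tagok g'"
proof (induction rule: step.induct)
  case (recv_write_step i g m tg j v)
  show ?case unfolding tagok_def
  proof (intro conjI ballI allI impI)
    fix x assume x: "x \<in># net (recv_write n i j v (g\<lparr>net := net g - {#(m, tg, j, i)#}\<rparr>))" "fst x = Read"
    then have "x \<in># net g" unfolding rw_net by (auto split: if_splits dest: in_diffD)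
    then show "isR (fst (snd x))" using recv_write_step x by (auto simp: tagok_def)
  next
    fix k x assume "x \<in># pend (procs (recv_write n i j v (g\<lparr>net := net g - {#(m, tg, j, i)#}\<rparr>)) k)"
    then show "isR (snd (snd x))" using recv_write_step by (auto simp: tagok_def rw_procs)
  qed
next
  case (recv_read i g tg j)
  then show ?case by (auto simp: tagok_def isR_def dest: in_diffD)
next
  case (read_respond i g j sn tg)
  then show ?case by (auto simp: tagok_def dest: in_diffD)
qed (auto simp: tagok_def isR_def dest: in_diffD)

lemma I3_net[simp]: "I3 n (g\<lparr>net := X\<rparr>) = I3 n g"
  by (simp add: I3_def msgs_of_def D1_def D2_def)

lemma I3_rw:
  fixes g :: "'v gstate"
  assumes I: "I3 n g" and i: "i < n" and j: "j < n"
  shows "I3 n (recv_write n i j v g)"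
proof (rule I3_gen[OF I _ rw_sent])
  show "\<And>x y. wsync (procs g x) y \<le> wsync (procs (recv_write n i j v g) x) y"
    by (auto simp: rw_procs)
  fix k
  let ?a = "wsync (procs g i)"
  let ?new = "(if ?a j = ?a i
     then map (\<lambda>l. (wmsg (?a j + 1) v, WTag (?a j + 1), i, l))
       (filter (\<lambda>l. (?a(i := ?a j + 1)) l = ?a j) [0..<n])
     else if ?a j + 1 < ?a i then
       [(wmsg (?a j + 2) (the (hist (procs g i) (?a j + 2))), WTag (?a j + 2), i, j)]
     else [])"
  let ?L = "length (filter (\<lambda>(m,tg',s,d). tg' = WTag k) ?new)"
  consider (A) "?a j = ?a i" | (B) "?a j \<noteq> ?a i" "?a j + 1 < ?a i" | (C) "?a j \<noteq> ?a i" "\<not> ?a j + 1 < ?a i"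
    by blast
  then show "?L = 0 \<or> (?L \<le> n \<and> (\<exists>x. x \<in> D1 n (recv_write n i j v g) k \<and> x \<notin> D1 n g k))
         \<or> (?L \<le> 1 \<and> (\<exists>p. p \<in> D2 n (recv_write n i j v g) k \<and> p \<notin> D2 n g k))"
  proof cases
    case A
    have nw: "?new = map (\<lambda>l. (wmsg (?a j + 1) v, WTag (?a j + 1), i, l))
       (filter (\<lambda>l. (?a(i := ?a j + 1)) l = ?a j) [0..<n])" by (rule if_P[OF A])
    have Lf: "?L = (if WTag (?a j + 1) = WTag k then length (filter (\<lambda>l. (?a(i := ?a j + 1)) l = ?a j) [0..<n]) else 0)"
      unfolding nw by (rule len_filter_map_tag)
    show ?thesis
    proof (cases "k = ?a j + 1")
      case True
      have "length (filter (\<lambda>l. (?a(i := ?a j + 1)) l = ?a j) [0..<n]) \<le> n"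
        using length_filter_le[of _ "[0..<n]"] by (simp only: length_upt diff_zero)
      moreover have "?L = length (filter (\<lambda>l. (?a(i := ?a j + 1)) l = ?a j) [0..<n])"
        using Lf True by (simp only: simp_thms(6) if_True)
      ultimately have "?L \<le> n" by linarith
      moreover have "i \<in> D1 n (recv_write n i j v g) k" "i \<notin> D1 n g k"
        using A True i by (auto simp: D1_def rw_procs)
      ultimately show ?thesis by blast
    next
      case False
      then have "?L = 0" using Lf by simp
      then show ?thesis by blast
    qed
  next
    case B
    have nw: "?new = [(wmsg (?a j + 2) (the (hist (procs g i) (?a j + 2))), WTag (?a j + 2), i, j)]"
      using B by (simp only: if_True if_False)
    show ?thesis
    proof (cases "k = ?a j + 2")
      case True
      have "?L \<le> 1" unfolding nw by simp
      moreover have "(i,j) \<in> D2 n (recv_write n i j v g) k" "(i,j) \<notin> D2 n g k"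
        using B True i j by (auto simp: D2_def rw_procs)
      ultimately show ?thesis by blast
    next
      case False
      then have "?L = 0" unfolding nw by simp
      then show ?thesis by blast
    qed
  next
    case C
    have nw: "?new = []" using C by (simp only: if_True if_False)
    show ?thesis unfolding nw by simp
  qed
qed


lemma I3_step_aux:
  fixes g g' :: "'v gstate"
  shows "step n t w g g' \<Longrightarrow> (\<And>x y. wsync (procs g x) y \<le> wsync (procs g' x) y) \<Longrightarrow> w < n \<Longrightarrow> srcok n g \<Longrightarrow> tagok g \<Longrightarrow> I3 n g \<Longrightarrow> I3 n g'"
proof (induction rule: step.induct)
  case (crash i g)
  show ?case by (rule I3_gen[where new="[]", OF crash.prems(5) crash.prems(1)]) simp_all
next
  case (write_invoke g wsn g' v)
  show ?case
  proof (rule I3_gen[where new="map (\<lambda>d. (wmsg wsn v, WTag wsn, w, d)) (filter (\<lambda>j. wsync (procs g' w) j = wsn - 1) [0..<n])", OF write_invoke.prems(5) write_invoke.prems(1)])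
    show "sent (send_all (wmsg wsn v) (WTag wsn) w (filter (\<lambda>j. wsync (procs g' w) j = wsn - 1) [0..<n]) g') =
      sent g @ map (\<lambda>d. (wmsg wsn v, WTag wsn, w, d)) (filter (\<lambda>j. wsync (procs g' w) j = wsn - 1) [0..<n])"
      using write_invoke by simp
    fix k
    let ?L = "length (filter (\<lambda>(m,tg',s,d). tg' = WTag k) (map (\<lambda>d. (wmsg wsn v, WTag wsn, w, d)) (filter (\<lambda>j. wsync (procs g' w) j = wsn - 1) [0..<n])))"
    show "?L = 0 \<or> (?L \<le> n \<and> (\<exists>x. x \<in> D1 n (send_all (wmsg wsn v) (WTag wsn) w (filter (\<lambda>j. wsync (procs g' w) j = wsn - 1) [0..<n]) g') k \<and> x \<notin> D1 n g k))
         \<or> (?L \<le> 1 \<and> (\<exists>p. p \<in> D2 n (send_all (wmsg wsn v) (WTag wsn) w (filter (\<lambda>j. wsync (procs g' w) j = wsn - 1) [0..<n]) g') k \<and> p \<notin> D2 n g k))"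
    proof (cases "k = wsn")
      case True
      have "?L \<le> n" unfolding len_filter_map_tag
        using length_filter_le[of _ "[0..<n]"] by (simp only: length_upt diff_zero if_True True simp_thms(6))
      moreover have "w \<in> D1 n (send_all (wmsg wsn v) (WTag wsn) w (filter (\<lambda>j. wsync (procs g' w) j = wsn - 1) [0..<n]) g') k" "w \<notin> D1 n g k"
        using write_invoke True by (auto simp: D1_def)
      ultimately show ?thesis by blast
    qed (simp add: len_filter_map_tag)
  qed
next
  case (write_return g wsn)
  show ?case by (rule I3_gen[where new="[]", OF write_return.prems(5) write_return.prems(1)]) simp_all
next
  case (read_invoke i g rsn)
  show ?case by (rule I3_gen[where new="map (\<lambda>d. (Read, RTag i rsn, i, d)) (filter (\<lambda>j. j \<noteq> i) [0..<n])", OF read_invoke.prems(5) read_invoke.prems(1)])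
    (simp_all add: len_filter_map_tag)
next
  case (read_mid i g rsn)
  show ?case by (rule I3_gen[where new="[]", OF read_mid.prems(5) read_mid.prems(1)]) simp_all
next
  case (read_return i g sn)
  show ?case by (rule I3_gen[where new="[]", OF read_return.prems(5) read_return.prems(1)]) simp_all
next
  case (recv_write_step i g m tg j v)
  have "j < n" using recv_write_step by (force simp: srcok_def)
  then show ?case using I3_rw[of n "g\<lparr>net := net g - {#(m, tg, j, i)#}\<rparr>" i j v] recv_write_step by simp
next
  case (recv_read i g tg j)
  show ?case by (rule I3_gen[where new="[]", OF recv_read.prems(5) recv_read.prems(1)]) simp_all
next
  case (read_respond i g j sn tg)
  have "isR tg" using read_respond by (force simp: tagok_def)
  then show ?case by (intro I3_gen[where new="[(Proceed, tg, i, j)]", OF read_respond.prems(5) read_respond.prems(1)])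
    (auto simp: isR_def)
next
  case (recv_proceed i g tg j)
  show ?case by (rule I3_gen[where new="[]", OF recv_proceed.prems(5) recv_proceed.prems(1)]) simp_all
qed

lemma I3_step: "step n t w g g' \<Longrightarrow> w < n \<Longrightarrow> srcok n g \<Longrightarrow> tagok g \<Longrightarrow> I3 n g \<Longrightarrow> I3 n g'"
  using I3_step_aux step_mono by blast


definition Rs :: "'v gstate \<Rightarrow> tag \<Rightarrow> nat" where
  "Rs g tg = length (filter (\<lambda>(m,tg',s,d). tg' = tg \<and> m = Read) (sent g))"
definition Ps :: "'v gstate \<Rightarrow> tag \<Rightarrow> nat" where
  "Ps g tg = length (filter (\<lambda>(m,tg',s,d). tg' = tg \<and> m \<noteq> Read) (sent g))"
definition NR :: "'v gstate \<Rightarrow> tag \<Rightarrow> nat" where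
  "NR g tg = size (filter_mset (\<lambda>(m,tg',s,d). tg' = tg \<and> m = Read) (net g))"
definition PC :: "'v lstate \<Rightarrow> tag \<Rightarrow> nat" where
  "PC l tg = size (filter_mset (\<lambda>(j,sn,tg'). tg' = tg) (pend l))"
definition PDp :: "nat \<Rightarrow> (nat \<Rightarrow> 'v lstate) \<Rightarrow> tag \<Rightarrow> nat" where
  "PDp n p tg = (\<Sum>k<n. PC (p k) tg)"

definition I1 :: "nat \<Rightarrow> 'v gstate \<Rightarrow> bool" where
  "I1 n g = (\<forall>tg. isR tg \<longrightarrow> Ps g tg + PDp n (procs g) tg + NR g tg \<le> Rs g tg)"
definition I2 :: "nat \<Rightarrow> 'v gstate \<Rightarrow> bool" where
  "I2 n g = (\<forall>a b. Rs g (RTag a b) \<le> n \<and> (0 < Rs g (RTag a b) \<longrightarrow> b \<le> rsync (procs g a) a))"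

lemma PDp_upd: "i < n \<Longrightarrow> PDp n (p(i := y)) tg + PC (p i) tg = PDp n p tg + PC y tg"
proof -
  assume i: "i < n"
  have "PDp n (p(i := y)) tg = PC y tg + (\<Sum>k\<in>{..<n} - {i}. PC ((p(i := y)) k) tg)"
    unfolding PDp_def using i by (subst sum.remove[of _ i]) auto
  moreover have "PDp n p tg = PC (p i) tg + (\<Sum>k\<in>{..<n} - {i}. PC (p k) tg)"
    unfolding PDp_def using i by (subst sum.remove[of _ i]) auto
  moreover have "(\<Sum>k\<in>{..<n} - {i}. PC ((p(i := y)) k) tg) = (\<Sum>k\<in>{..<n} - {i}. PC (p k) tg)"
    by (rule sum.cong) auto
  ultimately show ?thesis by simp
qed

lemma PDp_same: "pend y = pend (p i) \<Longrightarrow> PDp n (p(i := y)) tg = PDp n p tg"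
  unfolding PDp_def PC_def by (rule sum.cong) auto

lemma cnt_map1: "length (filter (\<lambda>(m,tg',s,d). tg' = tg \<and> m = Read) (map (\<lambda>d. (M,TG,S,d)) xs)) = (if TG = tg \<and> M = Read then length xs else 0)"
  by (induction xs) auto
lemma cnt_map2: "length (filter (\<lambda>(m,tg',s,d). tg' = tg \<and> m \<noteq> Read) (map (\<lambda>d. (M,TG,S,d)) xs)) = (if TG = tg \<and> M \<noteq> Read then length xs else 0)"
  by (induction xs) auto
lemma cnt_map3: "size (filter_mset (\<lambda>(m,tg',s,d). tg' = tg \<and> m = Read) (mset (map (\<lambda>d. (M,TG,S,d)) xs))) = (if TG = tg \<and> M = Read then length xs else 0)"
  by (induction xs) auto

lemma rw_new: "\<exists>new. sent (recv_write n i j v g) = sent g @ new \<and> net (recv_write n i j v g) = net g + mset new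
   \<and> (\<forall>x\<in>set new. fst x \<noteq> Read \<and> fst x \<noteq> Proceed \<and> \<not> isR (fst (snd x)))"
  by (rule exI, rule conjI[OF rw_sent], rule conjI[OF rw_net]) (auto simp: isR_def)



lemma I1_app:
  assumes I: "I1 n g" and S: "sent g' = sent g @ new" and N: "net g' = net g + mset new"
    and P: "PDp n (procs g') = PDp n (procs g)" and A: "\<forall>x\<in>set new. fst x = Read \<or> \<not> isR (fst (snd x))"
  shows "I1 n g'"
  unfolding I1_def
proof (intro allI impI)
  fix tg assume R: "isR tg"
  let ?P = "\<lambda>(m,tg',s,d). tg' = tg \<and> m = Read"
  have f2: "filter (\<lambda>(m,tg',s,d). tg' = tg \<and> m \<noteq> Read) new = []"
    using A R by (auto simp: filter_empty_conv)
  have "size (filter_mset ?P (mset new)) = length (filter ?P new)"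
    by (metis mset_filter size_mset)
  then show "Ps g' tg + PDp n (procs g') tg + NR g' tg \<le> Rs g' tg"
    using I R f2 unfolding I1_def Rs_def Ps_def NR_def S N P by auto
qed

lemma I1_net_sub: "I1 n g \<Longrightarrow> I1 n (g\<lparr>net := net g - X\<rparr>)"
  unfolding I1_def Rs_def Ps_def NR_def
proof (intro allI impI)
  fix tg assume I: "\<forall>tg. isR tg \<longrightarrow> length (filter (\<lambda>(m, tg', s, d). tg' = tg \<and> m \<noteq> Read) (sent g)) + PDp n (procs g) tg +
            size (filter_mset (\<lambda>(m, tg', s, d). tg' = tg \<and> m = Read) (net g)) \<le> length (filter (\<lambda>(m, tg', s, d). tg' = tg \<and> m = Read) (sent g))"
    and R: "isR tg"
  have "size (filter_mset (\<lambda>(m, tg', s, d). tg' = tg \<and> m = Read) (net g - X)) \<le> size (filter_mset (\<lambda>(m, tg', s, d). tg' = tg \<and> m = Read) (net g))"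
    by (intro size_mset_mono multiset_filter_mono) simp
  then show "length (filter (\<lambda>(m, tg', s, d). tg' = tg \<and> m \<noteq> Read) (sent (g\<lparr>net := net g - X\<rparr>))) + PDp n (procs (g\<lparr>net := net g - X\<rparr>)) tg +
         size (filter_mset (\<lambda>(m, tg', s, d). tg' = tg \<and> m = Read) (net (g\<lparr>net := net g - X\<rparr>))) \<le>
         length (filter (\<lambda>(m, tg', s, d). tg' = tg \<and> m = Read) (sent (g\<lparr>net := net g - X\<rparr>)))"
    using I R by fastforce
qed

lemma I1_step: "step n t w g g' \<Longrightarrow> I1 n g \<Longrightarrow> I1 n g'"
proof (induction rule: step.induct)
  case (crash i g)
  then show ?case unfolding I1_def Rs_def Ps_def NR_def by (simp add: PDp_same)
next
  case (write_invoke g wsn g' v)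
  show ?case
    by (rule I1_app[OF write_invoke.prems, where new="map (\<lambda>d. (wmsg wsn v, WTag wsn, w, d)) (filter (\<lambda>j. wsync (procs g' w) j = wsn - 1) [0..<n])"])
       (auto simp: write_invoke isR_def PDp_same)
next
  case (write_return g wsn)
  then show ?case unfolding I1_def Rs_def Ps_def NR_def by (simp add: PDp_same)
next
  case (read_invoke i g rsn)
  show ?case
    by (rule I1_app[OF read_invoke.prems, where new="map (\<lambda>d. (Read, RTag i rsn, i, d)) (filter (\<lambda>j. j \<noteq> i) [0..<n])"])
       (auto simp: PDp_same)
next
  case (read_mid i g rsn)
  then show ?case unfolding I1_def Rs_def Ps_def NR_def by (simp add: PDp_same)
next
  case (read_return i g sn)
  then show ?case unfolding I1_def Rs_def Ps_def NR_def by (simp add: PDp_same)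
next
  case (recv_write_step i g m tg j v)
  let ?g0 = "g\<lparr>net := net g - {#(m, tg, j, i)#}\<rparr>"
  obtain new where N: "sent (recv_write n i j v ?g0) = sent ?g0 @ new" "net (recv_write n i j v ?g0) = net ?g0 + mset new"
    "\<forall>x\<in>set new. fst x \<noteq> Read \<and> fst x \<noteq> Proceed \<and> \<not> isR (fst (snd x))"
    using rw_new[of n i j v ?g0] by blast
  have P: "PDp n (procs (recv_write n i j v ?g0)) = PDp n (procs ?g0)"
    unfolding PDp_def PC_def by (simp add: rw_procs)
  show ?case by (rule I1_app[OF I1_net_sub[OF recv_write_step.prems] N(1,2) P]) (use N(3) in auto)
next
  case (recv_read i g tg j)
  obtain M' where M: "net g = add_mset (Read, tg, j, i) M'" using recv_read(3) by (metis multi_member_split)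
  show ?case unfolding I1_def
  proof (intro allI impI)
    fix tg' assume R: "isR tg'"
    let ?y = "procs g i\<lparr>pend := pend (procs g i) + {#(j, wsync (procs g i) i, tg)#}\<rparr>"
    have U: "PDp n ((procs g)(i := ?y)) tg' + PC (procs g i) tg' = PDp n (procs g) tg' + PC ?y tg'"
      using PDp_upd[OF recv_read(1)] by blast
    have "PC ?y tg' = PC (procs g i) tg' + (if tg = tg' then 1 else 0)" by (simp add: PC_def)
    then show "Ps (upd_loc i (\<lambda>l. l\<lparr>pend := pend l + {#(j, wsync l i, tg)#}\<rparr>) (g\<lparr>net := net g - {#(Read, tg, j, i)#}\<rparr>)) tg' +
      PDp n (procs (upd_loc i (\<lambda>l. l\<lparr>pend := pend l + {#(j, wsync l i, tg)#}\<rparr>) (g\<lparr>net := net g - {#(Read, tg, j, i)#}\<rparr>))) tg' +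
      NR (upd_loc i (\<lambda>l. l\<lparr>pend := pend l + {#(j, wsync l i, tg)#}\<rparr>) (g\<lparr>net := net g - {#(Read, tg, j, i)#}\<rparr>)) tg'
      \<le> Rs (upd_loc i (\<lambda>l. l\<lparr>pend := pend l + {#(j, wsync l i, tg)#}\<rparr>) (g\<lparr>net := net g - {#(Read, tg, j, i)#}\<rparr>)) tg'"
      using recv_read.prems R U unfolding I1_def Rs_def Ps_def NR_def
      by (auto simp: M split: if_splits)
  qed
next
  case (read_respond i g j sn tg)
  obtain P' where M: "pend (procs g i) = add_mset (j, sn, tg) P'" using read_respond(3) by (metis multi_member_split)
  show ?case unfolding I1_def
  proof (intro allI impI)
    fix tg' assume R: "isR tg'"
    let ?y = "procs g i\<lparr>pend := pend (procs g i) - {#(j, sn, tg)#}\<rparr>"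
    have U: "PDp n ((procs g)(i := ?y)) tg' + PC (procs g i) tg' = PDp n (procs g) tg' + PC ?y tg'"
      using PDp_upd[OF read_respond(1)] by blast
    have "PC (procs g i) tg' = PC ?y tg' + (if tg = tg' then 1 else 0)" by (simp add: PC_def M)
    then show "Ps (send Proceed tg i j (upd_loc i (\<lambda>l. l\<lparr>pend := pend l - {#(j, sn, tg)#}\<rparr>) g)) tg' +
      PDp n (procs (send Proceed tg i j (upd_loc i (\<lambda>l. l\<lparr>pend := pend l - {#(j, sn, tg)#}\<rparr>) g))) tg' +
      NR (send Proceed tg i j (upd_loc i (\<lambda>l. l\<lparr>pend := pend l - {#(j, sn, tg)#}\<rparr>) g)) tg'
      \<le> Rs (send Proceed tg i j (upd_loc i (\<lambda>l. l\<lparr>pend := pend l - {#(j, sn, tg)#}\<rparr>) g)) tg'"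
      using read_respond.prems R U unfolding I1_def Rs_def Ps_def NR_def
      by (auto split: if_splits)
  qed
next
  case (recv_proceed i g tg j)
  have "I1 n (g\<lparr>net := net g - {#(Proceed, tg, j, i)#}\<rparr>)" by (rule I1_net_sub[OF recv_proceed.prems])
  then show ?case unfolding I1_def Rs_def Ps_def NR_def
    by (simp add: PDp_same)
qed


lemma I2_app:
  assumes I: "I2 n g" and S: "sent g' = sent g @ new"
    and mono: "\<And>x y. rsync (procs g x) y \<le> rsync (procs g' x) y" and A: "\<forall>x\<in>set new. fst x \<noteq> Read"
  shows "I2 n g'"
proof -
  have f: "filter (\<lambda>(m,tg',s,d). tg' = tg \<and> m = Read) new = []" for tg
    using A by (auto simp: filter_empty_conv)
  have "Rs g' tg = Rs g tg" for tg unfolding Rs_def S using f by simp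
  then show ?thesis using I mono unfolding I2_def by (metis le_trans)
qed

lemma I2_step_aux:
  fixes g g' :: "'v gstate"
  shows "step n t w g g' \<Longrightarrow> (\<And>x y. rsync (procs g x) y \<le> rsync (procs g' x) y) \<Longrightarrow> I2 n g \<Longrightarrow> I2 n g'"
proof (induction rule: step.induct)
  case (read_invoke i g rsn)
  let ?new = "map (\<lambda>d. (Read, RTag i rsn, i, d)) (filter (\<lambda>j. j \<noteq> i) [0..<n])"
  let ?g' = "send_all Read (RTag i rsn) i (filter (\<lambda>j. j \<noteq> i) [0..<n])
                (upd_loc i (\<lambda>l. l\<lparr>rsync := (rsync l)(i := rsn), phase := RWait1 rsn\<rparr>) g)"
  have R: "Rs ?g' tg = Rs g tg + (if tg = RTag i rsn then length (filter (\<lambda>j. j \<noteq> i) [0..<n]) else 0)" for tg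
    unfolding Rs_def send_all_simps upd_loc_simps filter_append length_append cnt_map1 by auto
  have ln: "length (filter (\<lambda>j. j \<noteq> i) [0..<n]) \<le> n"
    using length_filter_le[of _ "[0..<n]"] by (simp only: length_upt diff_zero)
  show ?case unfolding I2_def
  proof (intro allI)
    fix a b
    show "Rs ?g' (RTag a b) \<le> n \<and> (0 < Rs ?g' (RTag a b) \<longrightarrow> b \<le> rsync (procs ?g' a) a)"
    proof (cases "a = i \<and> b = rsn")
      case True
      have "0 < Rs g (RTag i rsn) \<longrightarrow> rsn \<le> rsync (procs g i) i" using read_invoke.prems(2) unfolding I2_def by blast
      then have "Rs g (RTag i rsn) = 0" using read_invoke(4) by linarith
      then have "Rs g (RTag a b) = 0" using True by simp
      then show ?thesis using R[of "RTag a b"] True ln by simp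
    next
      case False
      then have "Rs ?g' (RTag a b) = Rs g (RTag a b)" using R[of "RTag a b"] by auto
      moreover have "Rs g (RTag a b) \<le> n \<and> (0 < Rs g (RTag a b) \<longrightarrow> b \<le> rsync (procs g a) a)"
        using read_invoke.prems(2) unfolding I2_def by blast
      moreover have "rsync (procs g a) a \<le> rsync (procs ?g' a) a" by (rule read_invoke.prems(1))
      ultimately show ?thesis by linarith
    qed
  qed
next
  case (recv_write_step i g m tg j v)
  let ?g0 = "g\<lparr>net := net g - {#(m, tg, j, i)#}\<rparr>"
  obtain new where N: "sent (recv_write n i j v ?g0) = sent ?g0 @ new"
    "\<forall>x\<in>set new. fst x \<noteq> Read \<and> fst x \<noteq> Proceed \<and> \<not> isR (fst (snd x))"
    using rw_new[of n i j v ?g0] by blast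
  show ?case by (rule I2_app[OF recv_write_step.prems(2) _ recv_write_step.prems(1)]) (use N in auto)
next
  case (write_invoke g wsn g' v)
  show ?case by (rule I2_app[OF write_invoke.prems(2) _ write_invoke.prems(1),
     where new="map (\<lambda>d. (wmsg wsn v, WTag wsn, w, d)) (filter (\<lambda>j. wsync (procs g' w) j = wsn - 1) [0..<n])"])
     (auto simp: write_invoke)
next
  case (read_respond i g j sn tg)
  show ?case by (rule I2_app[OF read_respond.prems(2) _ read_respond.prems(1), where new="[(Proceed, tg, i, j)]"]) auto
next
  case (crash i g)
  show ?case by (rule I2_app[OF crash.prems(2) _ crash.prems(1), where new="[]"]) simp_all
next
  case (write_return g wsn)
  show ?case by (rule I2_app[OF write_return.prems(2) _ write_return.prems(1), where new="[]"]) simp_all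
next
  case (read_mid i g rsn)
  show ?case by (rule I2_app[OF read_mid.prems(2) _ read_mid.prems(1), where new="[]"]) simp_all
next
  case (read_return i g sn)
  show ?case by (rule I2_app[OF read_return.prems(2) _ read_return.prems(1), where new="[]"]) simp_all
next
  case (recv_read i g tg j)
  show ?case by (rule I2_app[OF recv_read.prems(2) _ recv_read.prems(1), where new="[]"]) simp_all
next
  case (recv_proceed i g tg j)
  show ?case by (rule I2_app[OF recv_proceed.prems(2) _ recv_proceed.prems(1), where new="[]"]) simp_all
qed

lemma I2_step: "step n t w g g' \<Longrightarrow> I2 n g \<Longrightarrow> I2 n g'"
  using I2_step_aux step_mono by blast


definition Inv :: "nat \<Rightarrow> 'v gstate \<Rightarrow> bool" where
  "Inv n g = (srcok n g \<and> tagok g \<and> I1 n g \<and> I2 n g \<and> I3 n g)"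

lemma Inv_init: "Inv n (init v0)"
proof -
  have "PDp n (procs (init v0)) tg = 0" for tg by (simp add: PDp_def PC_def init_def init_loc_def)
  then show ?thesis
    by (simp add: Inv_def srcok_def tagok_def I1_def I2_def I3_def Rs_def Ps_def NR_def msgs_of_def init_def init_loc_def)
qed

lemma Inv_reach: "reachable n t w v0 g \<Longrightarrow> w < n \<Longrightarrow> Inv n g"
  unfolding reachable_def
proof (induction rule: rtranclp_induct)
  case base show ?case by (rule Inv_init)
next
  case (step y z)
  have s: "step n t w y z" and w: "w < n" and I: "Inv n y" using step by auto
  have a: "srcok n y" "tagok y" "I1 n y" "I2 n y" "I3 n y" using I unfolding Inv_def by auto
  show ?case unfolding Inv_def
    using srcok_step[OF s w a(1)] tagok_step[OF s a(2)] I1_step[OF s a(3)] I2_step[OF s a(4)] I3_step[OF s w a(1,2,5)]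
    by blast
qed

lemma split_cnt: "length (filter (\<lambda>(m, tg', s, d). tg' = tg) xs) =
  length (filter (\<lambda>(m,tg',s,d). tg' = tg \<and> m = Read) xs) + length (filter (\<lambda>(m,tg',s,d). tg' = tg \<and> m \<noteq> Read) xs)"
  by (induction xs) auto

lemma bounds:
  assumes "reachable n t w v0 (g :: 'v gstate)" "w < n"
  shows "msgs_of g (RTag a b) \<le> 2 * n" "msgs_of g (WTag k) \<le> 2 * n\<^sup>2"
proof -
  have I: "Inv n g" by (rule Inv_reach[OF assms])
  have "isR (RTag a b)" by (simp add: isR_def)
  then have "Ps g (RTag a b) + PDp n (procs g) (RTag a b) + NR g (RTag a b) \<le> Rs g (RTag a b)"
    using I unfolding Inv_def I1_def by blast
  then have "Ps g (RTag a b) \<le> Rs g (RTag a b)" by linarith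
  moreover have "Rs g (RTag a b) \<le> n" using I by (auto simp: Inv_def I2_def)
  moreover have "msgs_of g (RTag a b) = Rs g (RTag a b) + Ps g (RTag a b)"
    unfolding msgs_of_def Rs_def Ps_def by (rule split_cnt)
  ultimately show "msgs_of g (RTag a b) \<le> 2 * n" by linarith
  have c1: "card (D1 n g k) \<le> n"
    using card_mono[of "{..<n}" "D1 n g k"] by (auto simp: D1_def)
  have c2: "card (D2 n g k) \<le> n * n"
    using card_mono[of "{..<n} \<times> {..<n}" "D2 n g k"] by (auto simp: D2_def card_cartesian_product)
  have "msgs_of g (WTag k) \<le> n * card (D1 n g k) + card (D2 n g k)" using I by (auto simp: Inv_def I3_def)
  moreover have "n * card (D1 n g k) \<le> n * n" using c1 by simp
  ultimately have "msgs_of g (WTag k) \<le> n * n + n * n" using c2 by linarith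
  then show "msgs_of g (WTag k) \<le> 2 * n\<^sup>2" by (simp add: power2_eq_square)
qed

theorem theorem2:
  shows "(\<forall>n t w v0 (g :: 'v gstate) m tg s d.
            reachable n t w v0 g \<and> (m, tg, s, d) \<in> set (sent g) \<longrightarrow>
            (\<exists>v. m = Write0 v) \<or> (\<exists>v. m = Write1 v) \<or> m = Read \<or> m = Proceed)
       \<and> (\<exists>C :: nat. \<forall>n t w v0 (g :: 'v gstate).
            2 * t < n \<and> w < n \<and> reachable n t w v0 g \<longrightarrow>
              (\<forall>i r. msgs_of g (RTag i r) \<le> C * n) \<and>
              (\<forall>k. msgs_of g (WTag k) \<le> C * n\<^sup>2))"
proof (intro conjI)
  show "\<forall>n t w v0 (g :: 'v gstate) m tg s d.
            reachable n t w v0 g \<and> (m, tg, s, d) \<in> set (sent g) \<longrightarrow>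
            (\<exists>v. m = Write0 v) \<or> (\<exists>v. m = Write1 v) \<or> m = Read \<or> m = Proceed"
  proof (intro allI impI)
    fix n t w v0 and g :: "'v gstate" and m :: "'v msg" and tg s d
    show "(\<exists>v. m = Write0 v) \<or> (\<exists>v. m = Write1 v) \<or> m = Read \<or> m = Proceed"
      by (cases m) auto
  qed
  show "\<exists>C :: nat. \<forall>n t w v0 (g :: 'v gstate).
            2 * t < n \<and> w < n \<and> reachable n t w v0 g \<longrightarrow>
              (\<forall>i r. msgs_of g (RTag i r) \<le> C * n) \<and>
              (\<forall>k. msgs_of g (WTag k) \<le> C * n\<^sup>2)"
  proof (rule exI[of _ 2], intro allI impI conjI)
    fix n t w v0 and g :: "'v gstate" and i r k
    assume h: "2 * t < n \<and> w < n \<and> reachable n t w v0 g"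
    show "msgs_of g (RTag i r) \<le> 2 * n" using bounds(1)[of n t w v0 g] h by blast
    show "msgs_of g (WTag k) \<le> 2 * n\<^sup>2" using bounds(2)[of n t w v0 g] h by blast
  qed
qed

end
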